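(* Turing machines and extended Turing machines can be converted into each other with only polynomial increase in machine size and while preserving polynomial runtimes. Precisely: for every Turing machine $\mathcal{T}$ there is an extended Turing machine $\mathcal{E}$, of size polynomial in the size of $\mathcal{T}$, that halts on exactly the same input tapes as $\mathcal{T}$ and such that if $\mathcal{T}$ halts within a number of steps polynomial in the input length then so does $\mathcal{E}$; and conversely, for every extended Turing machine $\mathcal{E}$ there is a Turing machine $\mathcal{T}$ with the same properties relative to $\mathcal{E}$.
   Context: A Turing machine is a tuple $(Q, q_I, q_H, \Sigma, \delta)$ with finite state set $Q$, initial state $q_I$, halt state $q_H$, finite alphabet $\Sigma$, and transition function $\delta: Q\times \Sigma_\bot \to Q \times \Sigma \times \{L,S,R\}$ (where $\Sigma_\bot = \Sigma\cup\{\bot\}$, $\bot$ a blank), with $\delta(q_H,a)=(q_H,a,S)$ for all $a\in\Sigma$ and $\delta(q_H,\bot)=(q_H,a,S)$ for some $a\in\Sigma$. Configurations are tuples $(q,\alpha,b,\gamma)$ with $q\in Q$, $\alpha,\gamma\in\Sigma^*$, $b\in\Sigma_\bot$. Steps: $(q,\alpha a,b,\gamma)\to(q',\alpha,a,b'\gamma)$ if $\delta(q,b)=(q',b',L)$; $(q,\alpha,b,\gamma)\to(q',\alpha,b',\gamma)$ if $\delta(q,b)=(q',b',S)$; $(q,\alpha,b,c\gamma)\to(q',\alpha b',c,\gamma)$ if $\delta(q,b)=(q',b',R)$; and at tape ends $(q,\epsilon,b,\gamma)\to(q',\epsilon,\bot,b'\gamma)$ for $\delta(q,b)=(q',b',L)$,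 $(q,\alpha,b,\epsilon)\to(q',\alpha b',\bot,\epsilon)$ for $\delta(q,b)=(q',b',R)$. A run on input $\alpha_I$ starts at $(q_I,\epsilon,\bot,\alpha_I)$; the machine halts on $\alpha_I$ if the run reaches state $q_H$. An extended Turing machine is defined identically except that $\delta: Q\times\Sigma_\bot\to Q\times\Sigma^*\times\{L,S,R\}$, with the requirement that if $\delta(q,b)=(q',\beta,d)$ then $d=S$ only if $|\beta|=1$; its steps are $(q,\alpha a,b,\gamma)\to(q',\alpha,a,\beta\gamma)$ for $\delta(q,b)=(q',\beta,L)$, $(q,\alpha,b,\gamma)\to(q',\alpha,b',\gamma)$ for $\delta(q,b)=(q',b',S)$, $(q,\alpha,b,c\gamma)\to(q',\alpha\beta,c,\gamma)$ for $\delta(q,b)=(q',\beta,R)$, and at tape ends $(q,\epsilon,b,\gamma)\to(q',\epsilon,\bot,\beta\gamma)$ for $\delta(q,b)=(q',\beta,L)$, $(q,\alpha,b,\epsilon)\to(q',\alpha\beta,\bot,\epsilon)$ for $\delta(q,b)=(q',\beta,R)$; the halting conventions and runs are as for Turing machines (so extended machines may insert several symbols in one step). *)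

theory Defs
  imports Main "HOL-Computational_Algebra.Polynomial"
begin

datatype dir = L | S | R

text \<open>The blank is represented by None, a tape symbol a by Some a.
  The transition function writes a list of symbols; an ordinary Turing machine
  is one that always writes exactly one symbol.\<close>
record machine =
  states :: "nat set"
  init   :: nat
  halt   :: nat
  alph   :: "nat set"
  delta  :: "nat \<Rightarrow> nat option \<Rightarrow> nat \<times> nat list \<times> dir"

definition sym_bot :: "nat set \<Rightarrow> nat option set" where
  "sym_bot A = insert None (Some ` A)"

definition is_etm :: "machine \<Rightarrow> bool" where
  "is_etm M \<longleftrightarrow>
     finite (states M) \<and> finite (alph M) \<and>
     init M \<in> states M \<and> halt M \<in> states M \<and>
     (\<forall>q\<in>states M. \<forall>b\<in>sym_bot (alph M).
        case delta M q b of (q', \<beta>, d) \<Rightarrow>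
          q' \<in> states M \<and> set \<beta> \<subseteq> alph M \<and> (d = S \<longrightarrow> length \<beta> = 1)) \<and>
     (\<forall>a\<in>alph M. delta M (halt M) (Some a) = (halt M, [a], S)) \<and>
     (\<exists>a\<in>alph M. delta M (halt M) None = (halt M, [a], S))"

definition is_tm :: "machine \<Rightarrow> bool" where
  "is_tm M \<longleftrightarrow> is_etm M \<and>
     (\<forall>q\<in>states M. \<forall>b\<in>sym_bot (alph M).
        case delta M q b of (q', \<beta>, d) \<Rightarrow> length \<beta> = 1)"

text \<open>Configuration (q, alpha, b, gamma); alpha is the tape left of the head
  (its last element is adjacent to the head), gamma the tape right of the head.\<close>
type_synonym config = "nat \<times> nat list \<times> nat option \<times> nat list"

definition step :: "machine \<Rightarrow> config \<Rightarrow> config" where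
  "step M c = (case c of (q, \<alpha>, b, \<gamma>) \<Rightarrow>
     (case delta M q b of
        (q', \<beta>, L) \<Rightarrow>
           (if \<alpha> = [] then (q', [], None, \<beta> @ \<gamma>)
            else (q', butlast \<alpha>, Some (last \<alpha>), \<beta> @ \<gamma>))
      | (q', \<beta>, S) \<Rightarrow> (q', \<alpha>, Some (hd \<beta>), \<gamma>)
      | (q', \<beta>, R) \<Rightarrow>
           (case \<gamma> of [] \<Rightarrow> (q', \<alpha> @ \<beta>, None, [])
                    | c # \<gamma>' \<Rightarrow> (q', \<alpha> @ \<beta>, Some c, \<gamma>'))))"

definition run :: "machine \<Rightarrow> nat list \<Rightarrow> nat \<Rightarrow> config" where
  "run M w n = (step M ^^ n) (init M, [], None, w)"

definition halts :: "machine \<Rightarrow> nat list \<Rightarrow> bool" where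
  "halts M w \<longleftrightarrow> (\<exists>n. fst (run M w n) = halt M)"

definition halts_within :: "machine \<Rightarrow> nat list \<Rightarrow> nat \<Rightarrow> bool" where
  "halts_within M w t \<longleftrightarrow> (\<exists>n\<le>t. fst (run M w n) = halt M)"

definition msize :: "machine \<Rightarrow> nat" where
  "msize M = card (states M) + card (alph M) +
     (\<Sum>(q,b)\<in>states M \<times> sym_bot (alph M). length (fst (snd (delta M q b))))"

definition simulates :: "machine \<Rightarrow> machine \<Rightarrow> bool" where
  "simulates M' M \<longleftrightarrow>
     alph M \<subseteq> alph M' \<and>
     (\<forall>w\<in>lists (alph M). halts M' w \<longleftrightarrow> halts M w) \<and>
     (\<forall>p :: nat poly.
        (\<forall>w\<in>lists (alph M). halts M w \<longrightarrow> halts_within M w (poly p (length w))) \<longrightarrow>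
        (\<exists>p' :: nat poly. \<forall>w\<in>lists (alph M).
           halts M' w \<longrightarrow> halts_within M' w (poly p' (length w))))"

end

theory Submission imports Defs "HOL-Library.Countable" begin

datatype tst = Init0 | Init1 | Init2 | Main nat | Lchk nat "nat option" | Lfix nat "nat option"
  | PW nat "nat option" | Push nat "nat option" nat | Wr nat "nat option" nat
  | FW nat | Fetch nat | RetR nat | Carry nat "nat option"

instance tst :: countable by countable_datatype

definition hol :: "nat list \<Rightarrow> nat option" where
  "hol A = (if A = [] then None else Some (last A))"
definition hor :: "nat list \<Rightarrow> nat option" where
  "hor A = (case A of [] \<Rightarrow> None | x # _ \<Rightarrow> Some x)"

type_synonym tcfg = "tst \<times> nat list \<times> nat option \<times> nat list"

definition stG :: "(tst \<Rightarrow> nat option \<Rightarrow> tst \<times> nat \<times> dir) \<Rightarrow> tcfg \<Rightarrow> tcfg" where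
  "stG d c = (case c of (s, A, h, R') \<Rightarrow> (case d s h of (s', a, dd) \<Rightarrow>
      (case dd of L \<Rightarrow> (s', butlast A, hol A, a # R')
        | S \<Rightarrow> (s', A, Some a, R')
        | R \<Rightarrow> (s', A @ [a], hor R', tl R'))))"

lemma stG_L: "d s h = (s', a, L) \<Longrightarrow> stG d (s, A, h, R') = (s', butlast A, hol A, a # R')"
  by (simp add: stG_def)
lemma stG_S: "d s h = (s', a, S) \<Longrightarrow> stG d (s, A, h, R') = (s', A, Some a, R')"
  by (simp add: stG_def)
lemma stG_R: "d s h = (s', a, R) \<Longrightarrow> stG d (s, A, h, R') = (s', A @ [a], hor R', tl R')"
  by (simp add: stG_def)

lemma fp_trans: "(f^^a) x = y \<Longrightarrow> (f^^b) y = z \<Longrightarrow> (f^^(a+b)) x = z"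
  by (metis add.commute comp_apply funpow_add)

lemma walkR:
  assumes "\<forall>x\<in>set C. d s (Some x) = (s, x, R)"
  shows "((stG d)^^length C) (s, Lt, hor (C @ r), tl (C @ r)) = (s, Lt @ C, hor r, tl r)"
  using assms
proof (induction C arbitrary: Lt)
  case Nil then show ?case by simp
next
  case (Cons c C)
  have "stG d (s, Lt, hor ((c # C) @ r), tl ((c # C) @ r)) = (s, Lt @ [c], hor (C @ r), tl (C @ r))"
    using Cons.prems by (simp add: hor_def stG_R)
  then show ?case using Cons by (simp add: funpow_Suc_right del: funpow.simps)
qed

lemma walkL:
  assumes "\<forall>x\<in>set C. d s (Some x) = (s, x, L)"
  shows "((stG d)^^length C) (s, butlast (A @ C), hol (A @ C), Rt) = (s, butlast A, hol A, C @ Rt)"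
  using assms
proof (induction C arbitrary: Rt rule: rev_induct)
  case Nil then show ?case by simp
next
  case (snoc c C)
  have "stG d (s, butlast (A @ C @ [c]), hol (A @ C @ [c]), Rt) = (s, butlast (A @ C), hol (A @ C), c # Rt)"
    proof -
    have e: "butlast (A @ C @ [c]) = A @ C" "hol (A @ C @ [c]) = Some c"
      by (simp_all add: hol_def butlast_append)
    show ?thesis unfolding e using snoc.prems stG_L[of d s "Some c" s c "A @ C" Rt] by simp
  qed
  then show ?case using snoc by (simp add: funpow_Suc_right del: funpow.simps)
qed

locale sim = fixes E :: machine assumes etm: "is_etm E"
begin

definition "m0 = Suc (Max (insert 0 (alph E)))"
definition "SH = m0"
definition "SB = Suc m0"
definition "SD = Suc (Suc m0)"

definition "nxt q b = fst (delta E q b)"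
definition "bet q b = fst (snd (delta E q b))"
definition "dr q b = snd (snd (delta E q b))"

definition enc :: "nat option \<Rightarrow> nat" where "enc c = (case c of None \<Rightarrow> SB | Some a \<Rightarrow> a)"
definition dec :: "nat \<Rightarrow> nat option" where "dec x = (if x = SB then None else Some x)"
definition isD :: "nat option \<Rightarrow> bool" where "isD h \<longleftrightarrow> h = None \<or> h = Some SD"
definition "symb q b i = (if i < length (bet q b) then bet q b ! i else SD)"
definition "wrstep q b i = (if length (bet q b) \<le> Suc i then (FW (nxt q b), symb q b i, L)
    else (Wr q b (Suc i), symb q b i, R))"
definition "pushstep q b i = (if i = 0 then (RetR (nxt q b), symb q b 0, R)
    else (Push q b (i - 1), symb q b i, L))"

definition dT :: "tst \<Rightarrow> nat option \<Rightarrow> tst \<times> nat \<times> dir" where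
 "dT s h = (case s of
    Init0 \<Rightarrow> (Init1, SD, R)
  | Init1 \<Rightarrow> (case h of Some x \<Rightarrow> (Init1, x, R) | None \<Rightarrow> (Init2, SH, R))
  | Init2 \<Rightarrow> (Main (init E), SB, S)
  | Main q \<Rightarrow> (if q = halt E then (Main q, case h of Some x \<Rightarrow> x | None \<Rightarrow> SB, S)
      else (case h of None \<Rightarrow> (Init0, SD, R) | Some x \<Rightarrow> if x = SH \<or> x = SD then (Init0, SD, R) else
        (case dr q (dec x) of S \<Rightarrow> (Main (nxt q (dec x)), hd (bet q (dec x)), S)
          | R \<Rightarrow> if bet q (dec x) = [] then (FW (nxt q (dec x)), SD, L) else wrstep q (dec x) 0
          | L \<Rightarrow> (Lchk q (dec x), SD, L))))
  | Lchk q b \<Rightarrow> (case h of Some x \<Rightarrow> if x = SH then (Lfix q b, SH, R) else (PW q b, x, S)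
                          | None \<Rightarrow> (PW q b, SD, S))
  | Lfix q b \<Rightarrow> (PW q b, SB, S)
  | PW q b \<Rightarrow> (if isD h then (if bet q b = [] then (RetR (nxt q b), SD, R)
                    else pushstep q b (length (bet q b) - 1)) else (PW q b, the h, L))
  | Push q b i \<Rightarrow> pushstep q b i
  | Wr q b i \<Rightarrow> wrstep q b i
  | FW q \<Rightarrow> (if isD h then (Fetch q, SD, R) else (FW q, the h, L))
  | Fetch q \<Rightarrow> (case h of Some x \<Rightarrow> if x = SH then (Carry q None, SH, R)
                  else if x \<in> alph E then (Carry q (Some x), SD, R) else (Init0, SD, R)
               | None \<Rightarrow> (Init0, SD, R))
  | RetR q \<Rightarrow> (if isD h then (Main q, SD, L) else (RetR q, the h, R))
  | Carry q c \<Rightarrow> (if isD h then (Main q, enc c, S) else (Carry q c, the h, R)))"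

abbreviation "stT \<equiv> stG dT"

abbreviation D :: "nat \<Rightarrow> nat list" where "D n \<equiv> replicate n SD"

definition repT :: "nat \<times> nat list \<times> nat option \<times> nat list \<Rightarrow> nat \<Rightarrow> nat \<Rightarrow> tcfg" where
  "repT c i j = (case c of (q, \<alpha>, b, \<gamma>) \<Rightarrow> (Main q, D i @ \<gamma> @ [SH] @ \<alpha>, Some (enc b), D j))"

lemma fin: "finite (alph E)" using etm by (simp add: is_etm_def)

lemma sig_lt: "a \<in> alph E \<Longrightarrow> a < m0"
  unfolding m0_def using fin by (simp add: le_imp_less_Suc)

lemma syms: "SH \<noteq> SB" "SH \<noteq> SD" "SB \<noteq> SD" "SB \<noteq> SH" "SD \<noteq> SH" "SD \<noteq> SB"
  by (simp_all add: SH_def SB_def SD_def)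

lemma sig_ne: "a \<in> alph E \<Longrightarrow> a \<noteq> SH \<and> a \<noteq> SB \<and> a \<noteq> SD"
  using sig_lt[of a] by (auto simp: SH_def SB_def SD_def)

lemma hol_D: "isD (hol (D n))" by (simp add: hol_def isD_def)
lemma hor_D: "isD (hor (D n))" by (cases n) (simp_all add: hor_def isD_def)
lemma butlast_D: "butlast (D n) = D (n - 1)" by (cases n) (simp_all add: butlast_append replicate_append_same[symmetric])
lemma tl_D: "tl (D n) = D (n - 1)" by (cases n) simp_all

lemma walkFW: "SD \<notin> set C \<Longrightarrow> \<forall>x\<in>set C. dT (FW q) (Some x) = (FW q, x, L)"
  by (auto simp: dT_def isD_def)
lemma walkPW: "SD \<notin> set C \<Longrightarrow> \<forall>x\<in>set C. dT (PW q b) (Some x) = (PW q b, x, L)"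
  by (auto simp: dT_def isD_def)
lemma walkRet: "SD \<notin> set C \<Longrightarrow> \<forall>x\<in>set C. dT (RetR q) (Some x) = (RetR q, x, R)"
  by (auto simp: dT_def isD_def)
lemma walkCar: "SD \<notin> set C \<Longrightarrow> \<forall>x\<in>set C. dT (Carry q c) (Some x) = (Carry q c, x, R)"
  by (auto simp: dT_def isD_def)
lemma walkI1: "\<forall>x\<in>set C. dT Init1 (Some x) = (Init1, x, R)"
  by (auto simp: dT_def)

lemma noSD: "set C \<subseteq> alph E \<Longrightarrow> SD \<notin> set C" using sig_ne by blast

lemma wr:
  assumes "Suc i + d = length (bet q b)" "dT s h = wrstep q b i"
  shows "(stT^^Suc d) (s, Lt, h, D j) = (FW (nxt q b), butlast (Lt @ take d (drop i (bet q b))),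
           hol (Lt @ take d (drop i (bet q b))), last (bet q b) # D (j - d))"
  using assms
proof (induction d arbitrary: i s h Lt j)
  case 0
  moreover have "bet q b \<noteq> []" using 0 by auto
  moreover have li: "length (bet q b) - 1 = i" using 0 by simp
  ultimately have "dT s h = (FW (nxt q b), last (bet q b), L)"
    by (simp add: wrstep_def symb_def last_conv_nth li)
  then show ?case by (simp add: stG_L)
next
  case (Suc d)
  have st: "dT s h = (Wr q b (Suc i), bet q b ! i, R)" using Suc.prems
    by (simp add: wrstep_def symb_def)
  have "stT (s, Lt, h, D j) = (Wr q b (Suc i), Lt @ [bet q b ! i], hor (D j), D (j - 1))"
    using stG_R[of dT, OF st] by (simp add: tl_D)
  moreover have "(stT^^Suc d) (Wr q b (Suc i), Lt @ [bet q b ! i], hor (D j), D (j - 1)) =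
     (FW (nxt q b), butlast ((Lt @ [bet q b ! i]) @ take d (drop (Suc i) (bet q b))),
           hol ((Lt @ [bet q b ! i]) @ take d (drop (Suc i) (bet q b))), last (bet q b) # D (j - 1 - d))"
    using Suc.prems by (intro Suc.IH) (auto simp: dT_def)
  moreover have "drop i (bet q b) = bet q b ! i # drop (Suc i) (bet q b)"
    using Suc.prems by (simp add: Cons_nth_drop_Suc)
  ultimately show ?case by (simp add: funpow_Suc_right del: funpow.simps)
qed

lemma push:
  assumes "i < length (bet q b)" "dT s h = pushstep q b i"
  shows "(stT^^Suc i) (s, D a, h, Rt) = (RetR (nxt q b), D (a - i) @ [bet q b ! 0],
     hor (drop 1 (take (Suc i) (bet q b)) @ Rt), tl (drop 1 (take (Suc i) (bet q b)) @ Rt))"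
  using assms
proof (induction i arbitrary: a h s Rt)
  case 0
  then have "dT s h = (RetR (nxt q b), bet q b ! 0, R)"
    by (simp add: pushstep_def symb_def)
  then show ?case by (simp add: stG_R)
next
  case (Suc i)
  have st: "dT s h = (Push q b i, bet q b ! Suc i, L)" using Suc.prems
    by (simp add: pushstep_def symb_def)
  have "stT (s, D a, h, Rt) = (Push q b i, D (a - 1), hol (D a), bet q b ! Suc i # Rt)"
    using stG_L[of dT, OF st] by (simp add: butlast_D)
  moreover have "(stT^^Suc i) (Push q b i, D (a - 1), hol (D a), bet q b ! Suc i # Rt) =
     (RetR (nxt q b), D (a - 1 - i) @ [bet q b ! 0],
     hor (drop 1 (take (Suc i) (bet q b)) @ bet q b ! Suc i # Rt), tl (drop 1 (take (Suc i) (bet q b)) @ bet q b ! Suc i # Rt))"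
    using Suc.prems by (intro Suc.IH) (auto simp: dT_def)
  moreover have "drop 1 (take (Suc (Suc i)) (bet q b)) = drop 1 (take (Suc i) (bet q b)) @ [bet q b ! Suc i]"
    using Suc.prems by (simp add: take_Suc_conv_app_nth[of "Suc i"] del: take_Suc)
  moreover have "a - 1 - i = a - Suc i" by simp
  ultimately show ?case by (simp add: funpow_Suc_right del: funpow.simps)
qed

lemma one: "stG d c = c' \<Longrightarrow> (stG d ^^ 1) c = c'" by simp

lemma DSD: "D (n - 1) @ [SD] = D (Suc (n - 1))"
  by (simp add: replicate_append_same)

lemma Rtail:
  assumes "set \<gamma> \<subseteq> alph E" "set \<alpha> \<subseteq> alph E"
  shows "\<exists>n i' j'. n \<le> length \<gamma> + length \<alpha> + 3 \<and>
    (stT^^n) (FW q, butlast (D i), hol (D i), \<gamma> @ [SH] @ \<alpha> @ D r) = repT (q, \<alpha>, hor \<gamma>, tl \<gamma>) i' j'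
    \<and> i' + length (tl \<gamma>) + j' \<le> i + length \<gamma> + r + 1"
proof -
  have d1: "dT (FW q) (hol (D i)) = (Fetch q, SD, R)" using hol_D by (simp add: dT_def)
  have s1: "(stT^^1) (FW q, butlast (D i), hol (D i), \<gamma> @ [SH] @ \<alpha> @ D r) =
     (Fetch q, D (Suc (i - 1)), hor (\<gamma> @ [SH] @ \<alpha> @ D r), tl (\<gamma> @ [SH] @ \<alpha> @ D r))"
    using stG_R[of dT, OF d1] by (simp add: butlast_D replicate_append_same)
  have nA: "SD \<notin> set \<alpha>" using assms noSD by blast
  show ?thesis
  proof (cases \<gamma>)
    case Nil
    have d2: "dT (Fetch q) (Some SH) = (Carry q None, SH, R)" by (simp add: dT_def)
    have s2: "(stT^^1) (Fetch q, D (Suc (i - 1)), hor (\<gamma> @ [SH] @ \<alpha> @ D r), tl (\<gamma> @ [SH] @ \<alpha> @ D r))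
       = (Carry q None, D (Suc (i - 1)) @ [SH], hor (\<alpha> @ D r), tl (\<alpha> @ D r))"
      using stG_R[of dT, OF d2] Nil by (simp add: hor_def)
    have s3: "(stT^^length \<alpha>) (Carry q None, D (Suc (i - 1)) @ [SH], hor (\<alpha> @ D r), tl (\<alpha> @ D r))
       = (Carry q None, D (Suc (i - 1)) @ [SH] @ \<alpha>, hor (D r), tl (D r))"
      using walkR[of _ dT, OF walkCar[OF nA]] by simp
    have d4: "dT (Carry q None) (hor (D r)) = (Main q, SB, S)" using hor_D by (simp add: dT_def enc_def)
    have s4: "(stT^^1) (Carry q None, D (Suc (i - 1)) @ [SH] @ \<alpha>, hor (D r), tl (D r))
       = repT (q, \<alpha>, hor \<gamma>, tl \<gamma>) (Suc (i - 1)) (r - 1)"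
      using stG_S[of dT, OF d4] Nil by (simp add: repT_def enc_def hor_def tl_D)
    show ?thesis
      apply (rule exI[where x="1 + 1 + length \<alpha> + 1"], rule exI[where x="Suc (i - 1)"], rule exI[where x="r - 1"])
      using fp_trans[OF fp_trans[OF fp_trans[OF s1 s2] s3] s4] Nil by auto
  next
    case (Cons c g)
    have cS: "c \<in> alph E" using assms Cons by auto
    have nG: "SD \<notin> set (g @ [SH] @ \<alpha>)" using assms noSD[of g] Cons nA syms by auto
    have d2: "dT (Fetch q) (Some c) = (Carry q (Some c), SD, R)" using cS sig_ne[OF cS] by (simp add: dT_def)
    have s2: "(stT^^1) (Fetch q, D (Suc (i - 1)), hor (\<gamma> @ [SH] @ \<alpha> @ D r), tl (\<gamma> @ [SH] @ \<alpha> @ D r))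
       = (Carry q (Some c), D (Suc (i - 1)) @ [SD], hor ((g @ [SH] @ \<alpha>) @ D r), tl ((g @ [SH] @ \<alpha>) @ D r))"
      using stG_R[of dT, OF d2] Cons by (simp add: hor_def)
    have s3: "(stT^^length (g @ [SH] @ \<alpha>)) (Carry q (Some c), D (Suc (i - 1)) @ [SD], hor ((g @ [SH] @ \<alpha>) @ D r), tl ((g @ [SH] @ \<alpha>) @ D r))
       = (Carry q (Some c), D (Suc (i - 1)) @ [SD] @ g @ [SH] @ \<alpha>, hor (D r), tl (D r))"
      using walkR[of _ dT, OF walkCar[OF nG]] by simp
    have d4: "dT (Carry q (Some c)) (hor (D r)) = (Main q, c, S)" using hor_D by (simp add: dT_def enc_def)
    have s4: "(stT^^1) (Carry q (Some c), D (Suc (i - 1)) @ [SD] @ g @ [SH] @ \<alpha>, hor (D r), tl (D r))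
       = repT (q, \<alpha>, hor \<gamma>, tl \<gamma>) (Suc (Suc (i - 1))) (r - 1)"
      using stG_S[of dT, OF d4] Cons by (simp add: repT_def enc_def hor_def tl_D replicate_append_same)
    show ?thesis
      apply (rule exI[where x="1 + 1 + length (g @ [SH] @ \<alpha>) + 1"], rule exI[where x="Suc (Suc (i - 1))"], rule exI[where x="r - 1"])
      using fp_trans[OF fp_trans[OF fp_trans[OF s1 s2] s3] s4] Cons by auto
  qed
qed

lemma Ltail:
  assumes "C \<noteq> []" "SD \<notin> set C" "set (bet q b) \<subseteq> alph E"
  shows "\<exists>n x. n \<le> 2 * length C + 2 * length (bet q b) + 2 \<and>
    (stT^^n) (PW q b, butlast (D i @ C), hol (D i @ C), D r) =
      (Main (nxt q b), D x @ bet q b @ butlast C, Some (last C), D (Suc (r - 1))) \<and> x \<le> i + 1"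
proof -
  have s1: "(stT^^length C) (PW q b, butlast (D i @ C), hol (D i @ C), D r) = (PW q b, butlast (D i), hol (D i), C @ D r)"
    using walkL[of _ dT, OF walkPW[OF assms(2)]] by simp
  have dR: "dT (RetR (nxt q b)) (hor (D r)) = (Main (nxt q b), SD, L)" using hor_D by (simp add: dT_def)
  have fin: "(stT^^1) (RetR (nxt q b), D x @ bet q b @ C, hor (D r), tl (D r)) =
       (Main (nxt q b), D x @ bet q b @ butlast C, Some (last C), D (Suc (r - 1)))" for x
    using stG_L[of dT, OF dR] assms(1) by (simp add: hol_def tl_D butlast_append)
  show ?thesis
  proof (cases "bet q b = []")
    case True
    have d2: "dT (PW q b) (hol (D i)) = (RetR (nxt q b), SD, R)" using hol_D True by (simp add: dT_def)
    have s2: "(stT^^1) (PW q b, butlast (D i), hol (D i), C @ D r) = (RetR (nxt q b), D (Suc (i - 1)), hor (C @ D r), tl (C @ D r))"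
      using stG_R[of dT, OF d2] by (simp add: butlast_D replicate_append_same)
    have s3: "(stT^^length C) (RetR (nxt q b), D (Suc (i - 1)), hor (C @ D r), tl (C @ D r)) = (RetR (nxt q b), D (Suc (i - 1)) @ bet q b @ C, hor (D r), tl (D r))"
      using walkR[of _ dT, OF walkRet[OF assms(2)]] True by simp
    show ?thesis
      apply (rule exI[where x="length C + 1 + length C + 1"], rule exI[where x="Suc (i - 1)"])
      using fp_trans[OF fp_trans[OF fp_trans[OF s1 s2] s3] fin] by auto
  next
    case False
    define k where "k = length (bet q b)"
    have kp: "0 < k" using False k_def by simp
    have d2: "dT (PW q b) (hol (D i)) = pushstep q b (k - 1)" using hol_D False by (simp add: dT_def k_def)
    have s2: "(stT^^Suc (k - 1)) (PW q b, D (i - 1), hol (D i), C @ D r) = (RetR (nxt q b), D (i - 1 - (k - 1)) @ [bet q b ! 0],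
     hor (drop 1 (take (Suc (k - 1)) (bet q b)) @ C @ D r), tl (drop 1 (take (Suc (k - 1)) (bet q b)) @ C @ D r))"
      by (rule push) (use kp k_def d2 in auto)
    have tk: "take (Suc (k - 1)) (bet q b) = bet q b" using kp k_def by simp
    have nB: "SD \<notin> set (drop 1 (bet q b) @ C)" using assms noSD[of "bet q b"] by (auto dest: in_set_dropD)
    have s3: "(stT^^length (drop 1 (bet q b) @ C)) (RetR (nxt q b), D (i - 1 - (k - 1)) @ [bet q b ! 0],
        hor ((drop 1 (bet q b) @ C) @ D r), tl ((drop 1 (bet q b) @ C) @ D r)) =
        (RetR (nxt q b), (D (i - 1 - (k - 1)) @ [bet q b ! 0]) @ (drop 1 (bet q b) @ C), hor (D r), tl (D r))"
      by (rule walkR[of _ dT, OF walkRet[OF nB]])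
    have eb: "[bet q b ! 0] @ drop 1 (bet q b) = bet q b" using False
      by (metis One_nat_def append_Cons append_Nil drop0 drop_Suc_Cons hd_conv_nth list.collapse)
    have s3': "(stT^^length (drop 1 (bet q b) @ C)) (RetR (nxt q b), D (i - 1 - (k - 1)) @ [bet q b ! 0],
        hor (drop 1 (take (Suc (k - 1)) (bet q b)) @ C @ D r), tl (drop 1 (take (Suc (k - 1)) (bet q b)) @ C @ D r)) =
        (RetR (nxt q b), D (i - 1 - (k - 1)) @ bet q b @ C, hor (D r), tl (D r))"
      using s3 tk eb by (metis append.assoc)
    have s2': "(stT^^Suc (k - 1)) (PW q b, butlast (D i), hol (D i), C @ D r) = (RetR (nxt q b), D (i - 1 - (k - 1)) @ [bet q b ! 0],
     hor (drop 1 (take (Suc (k - 1)) (bet q b)) @ C @ D r), tl (drop 1 (take (Suc (k - 1)) (bet q b)) @ C @ D r))"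
      using s2 by (simp add: butlast_D)
    have F: "(stT^^(length C + Suc (k - 1) + length (drop 1 (bet q b) @ C) + 1)) (PW q b, butlast (D i @ C), hol (D i @ C), D r) =
      (Main (nxt q b), D (i - 1 - (k - 1)) @ bet q b @ butlast C, Some (last C), D (Suc (r - 1)))"
      by (rule fp_trans[OF fp_trans[OF fp_trans[OF s1 s2'] s3'] fin])
    show ?thesis
    proof (intro exI conjI)
      show "(stT^^(length C + Suc (k - 1) + length (drop 1 (bet q b) @ C) + 1)) (PW q b, butlast (D i @ C), hol (D i @ C), D r) =
      (Main (nxt q b), D (i - 1 - (k - 1)) @ bet q b @ butlast C, Some (last C), D (Suc (r - 1)))" by (rule F)
      show "length C + Suc (k - 1) + length (drop 1 (bet q b) @ C) + 1 \<le> 2 * length C + 2 * length (bet q b) + 2"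
        using kp k_def by simp
      show "i - 1 - (k - 1) \<le> i + 1" by simp
    qed
  qed
qed

lemma dvalid:
  assumes "q \<in> states E" "b \<in> sym_bot (alph E)"
  shows "nxt q b \<in> states E \<and> set (bet q b) \<subseteq> alph E \<and> (dr q b = S \<longrightarrow> length (bet q b) = 1)"
proof -
  have "case delta E q b of (q', \<beta>, d) \<Rightarrow> q' \<in> states E \<and> set \<beta> \<subseteq> alph E \<and> (d = S \<longrightarrow> length \<beta> = 1)"
  proof -
    have H: "\<forall>q\<in>states E. \<forall>b\<in>sym_bot (alph E). case delta E q b of (q', \<beta>, d) \<Rightarrow> q' \<in> states E \<and> set \<beta> \<subseteq> alph E \<and> (d = S \<longrightarrow> length \<beta> = 1)"
      using etm unfolding is_etm_def by (elim conjE) assumption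
    show ?thesis using bspec[OF bspec[OF H assms(1)] assms(2)] .
  qed
  then show ?thesis by (simp add: nxt_def bet_def dr_def split: prod.splits)
qed

lemma enc_props:
  assumes "b \<in> sym_bot (alph E)"
  shows "enc b \<noteq> SH \<and> enc b \<noteq> SD \<and> dec (enc b) = b"
  using assms sig_ne syms by (auto simp: sym_bot_def enc_def dec_def)

lemma delta_eq: "delta E q b = (nxt q b, bet q b, dr q b)" by (simp add: nxt_def bet_def dr_def)

definition lc :: "nat \<times> nat list \<times> nat option \<times> nat list \<Rightarrow> nat \<Rightarrow> nat \<Rightarrow> nat" where
  "lc c i j = (case c of (q, \<alpha>, b, \<gamma>) \<Rightarrow> i + length \<gamma> + length \<alpha> + j)"

lemma macro:
  assumes "q \<in> states E" "q \<noteq> halt E" "set \<alpha> \<subseteq> alph E" "set \<gamma> \<subseteq> alph E" "b \<in> sym_bot (alph E)"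
  shows "\<exists>n i' j'. 0 < n \<and> n \<le> 2 * (i + length \<gamma> + length \<alpha> + j) + 3 * length (bet q b) + 12 \<and>
     (stT^^n) (repT (q, \<alpha>, b, \<gamma>) i j) = repT (step E (q, \<alpha>, b, \<gamma>)) i' j' \<and>
     lc (step E (q, \<alpha>, b, \<gamma>)) i' j' \<le> i + length \<gamma> + length \<alpha> + j + length (bet q b) + 2"
proof -
  obtain nq: "nxt q b \<in> states E" and bS: "set (bet q b) \<subseteq> alph E" and dS: "dr q b = S \<longrightarrow> length (bet q b) = 1"
    using dvalid[OF assms(1,5)] by blast
  have ep: "enc b \<noteq> SH" "enc b \<noteq> SD" "dec (enc b) = b" using enc_props[OF assms(5)] by auto
  have dM: "dT (Main q) (Some (enc b)) = (case dr q b of S \<Rightarrow> (Main (nxt q b), hd (bet q b), S)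
          | R \<Rightarrow> if bet q b = [] then (FW (nxt q b), SD, L) else wrstep q b 0
          | L \<Rightarrow> (Lchk q b, SD, L))"
    using assms(2) by (simp add: dT_def ep split: dir.split)
  define C0 where "C0 = \<gamma> @ [SH] @ \<alpha>"
  have nC0: "SD \<notin> set C0" using noSD[OF assms(3)] noSD[OF assms(4)] syms by (auto simp: C0_def)
  have rep0: "repT (q, \<alpha>, b, \<gamma>) i j = (Main q, D i @ C0, Some (enc b), D j)" by (simp add: repT_def C0_def)
  show ?thesis
  proof (cases "dr q b")
    case S
    have st: "step E (q, \<alpha>, b, \<gamma>) = (nxt q b, \<alpha>, Some (hd (bet q b)), \<gamma>)"
      by (simp add: step_def delta_eq S)
    have "(stT^^1) (repT (q, \<alpha>, b, \<gamma>) i j) = repT (step E (q, \<alpha>, b, \<gamma>)) i j"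
      using stG_S[of dT, OF dM[unfolded S dir.case]] by (simp add: st repT_def enc_def)
    then show ?thesis by (intro exI[of _ 1] exI conjI) (auto simp: st lc_def)
  next
    case L
    have d1: "dT (Main q) (Some (enc b)) = (Lchk q b, SD, L)" using dM L by simp
    have s1: "(stT^^1) (Main q, D i @ C0, Some (enc b), D j) = (Lchk q b, butlast (D i @ C0), hol (D i @ C0), SD # D j)"
      using stG_L[of dT, OF d1] by simp
    show ?thesis
    proof (cases \<alpha> rule: rev_cases)
      case Nil
      have st: "step E (q, \<alpha>, b, \<gamma>) = (nxt q b, [], None, bet q b @ \<gamma>)"
        by (simp add: step_def delta_eq L Nil)
      have e1: "butlast (D i @ C0) = D i @ \<gamma>" "hol (D i @ C0) = Some SH"
        by (simp_all add: C0_def Nil hol_def butlast_append)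
      have d2: "dT (Lchk q b) (Some SH) = (Lfix q b, SH, R)" by (simp add: dT_def)
      have s2: "(stT^^1) (Lchk q b, D i @ \<gamma>, Some SH, SD # D j) = (Lfix q b, D i @ \<gamma> @ [SH], Some SD, D j)"
        using stG_R[of dT, OF d2] by (simp add: hor_def)
      have d3: "dT (Lfix q b) (Some SD) = (PW q b, SB, S)" by (simp add: dT_def)
      have s3: "(stT^^1) (Lfix q b, D i @ \<gamma> @ [SH], Some SD, D j) = (PW q b, butlast (D i @ (\<gamma> @ [SH, SB])), hol (D i @ (\<gamma> @ [SH, SB])), D j)"
        using stG_S[of dT, OF d3] by (simp add: hol_def butlast_append)
      have nC: "SD \<notin> set (\<gamma> @ [SH, SB])" using noSD[OF assms(4)] syms by auto
      obtain n2 x where n2: "n2 \<le> 2 * length (\<gamma> @ [SH, SB]) + 2 * length (bet q b) + 2"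
        and e2: "(stT^^n2) (PW q b, butlast (D i @ (\<gamma> @ [SH, SB])), hol (D i @ (\<gamma> @ [SH, SB])), D j) =
          (Main (nxt q b), D x @ bet q b @ butlast (\<gamma> @ [SH, SB]), Some (last (\<gamma> @ [SH, SB])), D (Suc (j - 1)))"
        and x: "x \<le> i + 1"
        using Ltail[OF _ nC bS, of i j] by blast
      have e3: "(Main (nxt q b), D x @ bet q b @ butlast (\<gamma> @ [SH, SB]), Some (last (\<gamma> @ [SH, SB])), D (Suc (j - 1)))
         = repT (step E (q, \<alpha>, b, \<gamma>)) x (Suc (j - 1))"
        by (simp add: st repT_def enc_def butlast_append)
      have F: "(stT^^(1 + 1 + 1 + n2)) (repT (q, \<alpha>, b, \<gamma>) i j) = repT (step E (q, \<alpha>, b, \<gamma>)) x (Suc (j - 1))"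
        unfolding rep0 e3[symmetric] using fp_trans[OF fp_trans[OF fp_trans[OF s1[unfolded e1] s2] s3] e2] .
      show ?thesis
      proof (intro exI conjI)
        show "(stT^^(1 + 1 + 1 + n2)) (repT (q, \<alpha>, b, \<gamma>) i j) = repT (step E (q, \<alpha>, b, \<gamma>)) x (Suc (j - 1))" by (rule F)
        show "1 + 1 + 1 + n2 \<le> 2 * (i + length \<gamma> + length \<alpha> + j) + 3 * length (bet q b) + 12"
          using n2 by simp
        show "lc (step E (q, \<alpha>, b, \<gamma>)) x (Suc (j - 1)) \<le> i + length \<gamma> + length \<alpha> + j + length (bet q b) + 2"
          using x by (simp add: st lc_def)
      qed simp
    next
      case (snoc a0 a)
      have aS: "a \<in> alph E" using assms(3) snoc by auto
      have st: "step E (q, \<alpha>, b, \<gamma>) = (nxt q b, a0, Some a, bet q b @ \<gamma>)"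
        by (simp add: step_def delta_eq L snoc)
      have e1: "butlast (D i @ C0) = D i @ \<gamma> @ [SH] @ a0" "hol (D i @ C0) = Some a"
        by (simp_all add: C0_def snoc hol_def butlast_append)
      have d2: "dT (Lchk q b) (Some a) = (PW q b, a, S)" using sig_ne[OF aS] by (simp add: dT_def)
      define C where "C = \<gamma> @ [SH] @ a0 @ [a]"
      have s2: "(stT^^1) (Lchk q b, D i @ \<gamma> @ [SH] @ a0, Some a, SD # D j) = (PW q b, butlast (D i @ C), hol (D i @ C), D (Suc j))"
        using stG_S[of dT, OF d2] by (simp add: C_def hol_def butlast_append)
      have nC: "SD \<notin> set C" using noSD[OF assms(4)] noSD[OF assms(3)] syms snoc by (auto simp: C_def)
      obtain n2 x where n2: "n2 \<le> 2 * length C + 2 * length (bet q b) + 2"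
        and e2: "(stT^^n2) (PW q b, butlast (D i @ C), hol (D i @ C), D (Suc j)) =
          (Main (nxt q b), D x @ bet q b @ butlast C, Some (last C), D (Suc (Suc j - 1)))"
        and x: "x \<le> i + 1"
        using Ltail[OF _ nC bS, of i "Suc j"] by (simp only: C_def) blast
      have e3: "(Main (nxt q b), D x @ bet q b @ butlast C, Some (last C), D (Suc (Suc j - 1)))
         = repT (step E (q, \<alpha>, b, \<gamma>)) x (Suc j)"
        by (simp add: st repT_def enc_def butlast_append C_def)
      have F: "(stT^^(1 + 1 + n2)) (repT (q, \<alpha>, b, \<gamma>) i j) = repT (step E (q, \<alpha>, b, \<gamma>)) x (Suc j)"
        unfolding rep0 e3[symmetric] using fp_trans[OF fp_trans[OF s1[unfolded e1] s2] e2] .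
      show ?thesis
      proof (intro exI conjI)
        show "(stT^^(1 + 1 + n2)) (repT (q, \<alpha>, b, \<gamma>) i j) = repT (step E (q, \<alpha>, b, \<gamma>)) x (Suc j)" by (rule F)
        show "1 + 1 + n2 \<le> 2 * (i + length \<gamma> + length \<alpha> + j) + 3 * length (bet q b) + 12"
          using n2 by (simp add: C_def snoc)
        show "lc (step E (q, \<alpha>, b, \<gamma>)) x (Suc j) \<le> i + length \<gamma> + length \<alpha> + j + length (bet q b) + 2"
          using x unfolding st by (simp add: lc_def snoc)
      qed simp
    qed
  next
    case R
    have st: "step E (q, \<alpha>, b, \<gamma>) = (nxt q b, \<alpha> @ bet q b, hor \<gamma>, tl \<gamma>)"
      by (cases \<gamma>) (simp_all add: step_def delta_eq R hor_def)
    have aS: "set (\<alpha> @ bet q b) \<subseteq> alph E" using assms(3) bS by auto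
    show ?thesis
    proof (cases "bet q b = []")
      case True
      have d1: "dT (Main q) (Some (enc b)) = (FW (nxt q b), SD, L)" using dM R True by simp
      have s1: "(stT^^1) (Main q, D i @ C0, Some (enc b), D j) = (FW (nxt q b), butlast (D i @ C0), hol (D i @ C0), SD # D j)"
        using stG_L[of dT, OF d1] by simp
      have s2: "(stT^^length C0) (FW (nxt q b), butlast (D i @ C0), hol (D i @ C0), SD # D j) =
           (FW (nxt q b), butlast (D i), hol (D i), \<gamma> @ [SH] @ \<alpha> @ D (Suc j))"
        using walkL[of _ dT, OF walkFW[OF nC0]] by (simp add: C0_def)
      obtain n2 i' j' where n2: "n2 \<le> length \<gamma> + length \<alpha> + 3"
        and e2: "(stT^^n2) (FW (nxt q b), butlast (D i), hol (D i), \<gamma> @ [SH] @ \<alpha> @ D (Suc j)) = repT (nxt q b, \<alpha>, hor \<gamma>, tl \<gamma>) i' j'"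
        and l2: "i' + length (tl \<gamma>) + j' \<le> i + length \<gamma> + Suc j + 1"
        using Rtail[OF assms(4) assms(3)] by blast
      have F: "(stT^^(1 + length C0 + n2)) (repT (q, \<alpha>, b, \<gamma>) i j) = repT (step E (q, \<alpha>, b, \<gamma>)) i' j'"
        unfolding rep0 using fp_trans[OF fp_trans[OF s1 s2] e2] by (simp add: st True)
      show ?thesis
      proof (intro exI conjI)
        show "(stT^^(1 + length C0 + n2)) (repT (q, \<alpha>, b, \<gamma>) i j) = repT (step E (q, \<alpha>, b, \<gamma>)) i' j'" by (rule F)
        show "1 + length C0 + n2 \<le> 2 * (i + length \<gamma> + length \<alpha> + j) + 3 * length (bet q b) + 12"
          using n2 by (simp add: C0_def)
        show "lc (step E (q, \<alpha>, b, \<gamma>)) i' j' \<le> i + length \<gamma> + length \<alpha> + j + length (bet q b) + 2"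
          using l2 by (simp add: st lc_def True)
      qed simp
    next
      case False
      define k where "k = length (bet q b)"
      have kp: "0 < k" using False k_def by simp
      have d1: "dT (Main q) (Some (enc b)) = wrstep q b 0" using dM R False by simp
      have s1: "(stT^^Suc (k - 1)) (Main q, D i @ C0, Some (enc b), D j) =
         (FW (nxt q b), butlast ((D i @ C0) @ take (k - 1) (drop 0 (bet q b))),
           hol ((D i @ C0) @ take (k - 1) (drop 0 (bet q b))), last (bet q b) # D (j - (k - 1)))"
        by (rule wr) (use kp k_def d1 in auto)
      have tb: "take (k - 1) (drop 0 (bet q b)) = butlast (bet q b)" by (simp add: k_def butlast_conv_take)
      have nC1: "SD \<notin> set (C0 @ butlast (bet q b))" using nC0 noSD[OF bS] by (auto dest: in_set_butlastD)
      have s2: "(stT^^length (C0 @ butlast (bet q b))) (FW (nxt q b), butlast (D i @ (C0 @ butlast (bet q b))), hol (D i @ (C0 @ butlast (bet q b))), last (bet q b) # D (j - (k - 1))) =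
           (FW (nxt q b), butlast (D i), hol (D i), (C0 @ butlast (bet q b)) @ last (bet q b) # D (j - (k - 1)))"
        by (rule walkL[of _ dT, OF walkFW[OF nC1]])
      have eq: "(C0 @ butlast (bet q b)) @ last (bet q b) # D (j - (k - 1)) = \<gamma> @ [SH] @ (\<alpha> @ bet q b) @ D (j - (k - 1))"
        using False by (simp add: C0_def)
      obtain n2 i' j' where n2: "n2 \<le> length \<gamma> + length (\<alpha> @ bet q b) + 3"
        and e2: "(stT^^n2) (FW (nxt q b), butlast (D i), hol (D i), \<gamma> @ [SH] @ (\<alpha> @ bet q b) @ D (j - (k - 1))) = repT (nxt q b, \<alpha> @ bet q b, hor \<gamma>, tl \<gamma>) i' j'"
        and l2: "i' + length (tl \<gamma>) + j' \<le> i + length \<gamma> + (j - (k - 1)) + 1"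
        using Rtail[OF assms(4) aS] by blast
      have s1': "(stT^^Suc (k - 1)) (Main q, D i @ C0, Some (enc b), D j) =
         (FW (nxt q b), butlast (D i @ (C0 @ butlast (bet q b))), hol (D i @ (C0 @ butlast (bet q b))), last (bet q b) # D (j - (k - 1)))"
        using s1 unfolding tb by simp
      have F: "(stT^^(Suc (k - 1) + length (C0 @ butlast (bet q b)) + n2)) (repT (q, \<alpha>, b, \<gamma>) i j) = repT (step E (q, \<alpha>, b, \<gamma>)) i' j'"
        unfolding rep0 st using fp_trans[OF fp_trans[OF s1' s2] e2[folded eq]] .
      show ?thesis
      proof (intro exI conjI)
        show "(stT^^(Suc (k - 1) + length (C0 @ butlast (bet q b)) + n2)) (repT (q, \<alpha>, b, \<gamma>) i j) = repT (step E (q, \<alpha>, b, \<gamma>)) i' j'" by (rule F)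
        show "Suc (k - 1) + length (C0 @ butlast (bet q b)) + n2 \<le> 2 * (i + length \<gamma> + length \<alpha> + j) + 3 * length (bet q b) + 12"
          using n2 kp by (simp add: C0_def k_def)
        show "lc (step E (q, \<alpha>, b, \<gamma>)) i' j' \<le> i + length \<gamma> + length \<alpha> + j + length (bet q b) + 2"
          using l2 kp by (simp add: st lc_def k_def)
      qed simp
    qed
  qed
qed

definition valid :: "nat \<times> nat list \<times> nat option \<times> nat list \<Rightarrow> bool" where
  "valid c = (case c of (q, \<alpha>, b, \<gamma>) \<Rightarrow> q \<in> states E \<and> set \<alpha> \<subseteq> alph E \<and> b \<in> sym_bot (alph E) \<and> set \<gamma> \<subseteq> alph E)"

lemma valid_step: assumes "valid c" shows "valid (step E c)"
proof -
  obtain q \<alpha> b \<gamma> where c: "c = (q, \<alpha>, b, \<gamma>)" by (cases c) auto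
  have v: "q \<in> states E" "set \<alpha> \<subseteq> alph E" "b \<in> sym_bot (alph E)" "set \<gamma> \<subseteq> alph E"
    using assms by (auto simp: valid_def c)
  obtain nq: "nxt q b \<in> states E" and bS: "set (bet q b) \<subseteq> alph E" and dS: "dr q b = S \<longrightarrow> length (bet q b) = 1"
    using dvalid[OF v(1,3)] by blast
  show ?thesis
  proof (cases "dr q b")
    case L
    have "\<alpha> \<noteq> [] \<Longrightarrow> last \<alpha> \<in> alph E" using v(2) last_in_set by blast
    then show ?thesis using v nq bS L
      by (auto simp: c step_def delta_eq valid_def sym_bot_def dest: in_set_butlastD)
  next
    case S
    then obtain x where "bet q b = [x]" using dS by (cases "bet q b") auto
    then show ?thesis using v nq bS S by (auto simp: c step_def delta_eq valid_def sym_bot_def)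
  next
    case R then show ?thesis using v nq bS
      by (auto simp: c step_def delta_eq valid_def sym_bot_def split: list.splits)
  qed
qed

lemma valid_run: "w \<in> lists (alph E) \<Longrightarrow> valid (run E w k)"
proof (induction k)
  case 0 then show ?case using etm by (auto simp: run_def valid_def sym_bot_def is_etm_def)
next
  case (Suc k)
  have "run E w (Suc k) = step E (run E w k)" by (simp add: run_def)
  then show ?case using Suc valid_step by simp
qed

definition "K = msize E"

lemma bet_le: assumes "q \<in> states E" "b \<in> sym_bot (alph E)" shows "length (bet q b) \<le> K"
proof -
  have f: "finite (states E \<times> sym_bot (alph E))" using etm fin by (auto simp: is_etm_def sym_bot_def)
  have "length (bet q b) = (\<lambda>(q, b). length (fst (snd (delta E q b)))) (q, b)" by (simp add: bet_def)
  also have "\<dots> \<le> (\<Sum>(q,b)\<in>states E \<times> sym_bot (alph E). length (fst (snd (delta E q b))))"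
    by (rule member_le_sum) (use assms f in auto)
  also have "\<dots> \<le> K" by (simp add: K_def msize_def)
  finally show ?thesis .
qed

lemma init_phase: "(stT^^(1 + length w + 1 + 1)) (Init0, [], None, w) = repT (init E, [], None, w) (Suc 0) 0"
proof -
  have s1: "(stT^^1) (Init0, [], None, w) = (Init1, [SD], hor (w @ []), tl (w @ []))"
    using stG_R[of dT Init0 None Init1 SD] by (simp add: dT_def)
  have s2: "(stT^^length w) (Init1, [SD], hor (w @ []), tl (w @ [])) = (Init1, [SD] @ w, None, [])"
    using walkR[of w dT Init1 "[SD]" "[]", OF walkI1] by (simp add: hor_def)
  have s3: "(stT^^1) (Init1, [SD] @ w, None, []) = (Init2, [SD] @ w @ [SH], None, [])"
    using stG_R[of dT Init1 None Init2 SH] by (simp add: dT_def hor_def)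
  have s4: "(stT^^1) (Init2, [SD] @ w @ [SH], None, []) = repT (init E, [], None, w) (Suc 0) 0"
    using stG_S[of dT Init2 None "Main (init E)" SB] by (simp add: dT_def repT_def enc_def)
  show ?thesis using fp_trans[OF fp_trans[OF fp_trans[OF s1 s2] s3] s4] .
qed

fun B :: "nat \<Rightarrow> nat \<Rightarrow> nat" where
  "B n 0 = n + 3"
| "B n (Suc k) = B n k + 2 * (n + 1 + k * (K + 2)) + 3 * K + 12"

lemma good:
  assumes w: "w \<in> lists (alph E)"
  shows "(\<forall>j<k. fst (run E w j) \<noteq> halt E) \<longrightarrow> (\<exists>t i j. k \<le> t \<and> t \<le> B (length w) k \<and>
     (stT^^t) (Init0, [], None, w) = repT (run E w k) i j \<and> lc (run E w k) i j \<le> length w + 1 + k * (K + 2))"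
proof (induction k)
  case 0
  show ?case
    apply (rule impI, rule exI[of _ "1 + length w + 1 + 1"], rule exI[of _ "Suc 0"], rule exI[of _ 0])
    using init_phase by (auto simp: run_def lc_def)
next
  case (Suc k)
  show ?case
  proof
    assume nh: "\<forall>j<Suc k. fst (run E w j) \<noteq> halt E"
    then obtain t i j where t: "k \<le> t" "t \<le> B (length w) k" and e: "(stT^^t) (Init0, [], None, w) = repT (run E w k) i j"
      and l: "lc (run E w k) i j \<le> length w + 1 + k * (K + 2)" using Suc.IH by auto
    obtain q \<alpha> b \<gamma> where c: "run E w k = (q, \<alpha>, b, \<gamma>)" by (cases "run E w k") auto
    have v: "q \<in> states E" "set \<alpha> \<subseteq> alph E" "b \<in> sym_bot (alph E)" "set \<gamma> \<subseteq> alph E"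
      using valid_run[OF w, of k] by (auto simp: valid_def c)
    have nq: "q \<noteq> halt E" using nh c by (metis fst_conv lessI)
    have bl: "length (bet q b) \<le> K" using bet_le v by blast
    obtain n i' j' where n: "0 < n" "n \<le> 2 * (i + length \<gamma> + length \<alpha> + j) + 3 * length (bet q b) + 12"
      and e2: "(stT^^n) (repT (q, \<alpha>, b, \<gamma>) i j) = repT (step E (q, \<alpha>, b, \<gamma>)) i' j'"
      and l2: "lc (step E (q, \<alpha>, b, \<gamma>)) i' j' \<le> i + length \<gamma> + length \<alpha> + j + length (bet q b) + 2"
      using macro[OF v(1) nq v(2) v(4) v(3)] by blast
    have rs: "run E w (Suc k) = step E (q, \<alpha>, b, \<gamma>)" using c by (simp add: run_def)
    have lc0: "i + length \<gamma> + length \<alpha> + j \<le> length w + 1 + k * (K + 2)" using l by (simp add: c lc_def)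
    show "\<exists>t i j. Suc k \<le> t \<and> t \<le> B (length w) (Suc k) \<and>
     (stT^^t) (Init0, [], None, w) = repT (run E w (Suc k)) i j \<and> lc (run E w (Suc k)) i j \<le> length w + 1 + Suc k * (K + 2)"
    proof (intro exI conjI)
      show "(stT^^(t + n)) (Init0, [], None, w) = repT (run E w (Suc k)) i' j'"
        unfolding rs using fp_trans[OF e[unfolded c] e2] .
      show "Suc k \<le> t + n" using t n by simp
      show "t + n \<le> B (length w) (Suc k)" using t n lc0 bl by simp
      show "lc (run E w (Suc k)) i' j' \<le> length w + 1 + Suc k * (K + 2)" using l2 lc0 bl rs by simp
    qed
  qed
qed

definition "alphT = alph E \<union> {SH, SB, SD}"
definition "SBo = sym_bot (alph E)"
definition "STs = {Init0, Init1, Init2} \<union> Main ` states E \<union> (\<lambda>(q,b). Lchk q b) ` (states E \<times> SBo)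
   \<union> (\<lambda>(q,b). Lfix q b) ` (states E \<times> SBo) \<union> (\<lambda>(q,b). PW q b) ` (states E \<times> SBo)
   \<union> (\<lambda>(q,b,i). Push q b i) ` (states E \<times> SBo \<times> {..<K}) \<union> (\<lambda>(q,b,i). Wr q b i) ` (states E \<times> SBo \<times> {..<K})
   \<union> FW ` states E \<union> Fetch ` states E \<union> RetR ` states E \<union> (\<lambda>(q,c). Carry q c) ` (states E \<times> SBo)"

lemma STs_simps:
  "Init0 \<in> STs" "Init1 \<in> STs" "Init2 \<in> STs"
  "Main q \<in> STs \<longleftrightarrow> q \<in> states E"
  "Lchk q b \<in> STs \<longleftrightarrow> q \<in> states E \<and> b \<in> SBo"
  "Lfix q b \<in> STs \<longleftrightarrow> q \<in> states E \<and> b \<in> SBo"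
  "PW q b \<in> STs \<longleftrightarrow> q \<in> states E \<and> b \<in> SBo"
  "Push q b i \<in> STs \<longleftrightarrow> q \<in> states E \<and> b \<in> SBo \<and> i < K"
  "Wr q b i \<in> STs \<longleftrightarrow> q \<in> states E \<and> b \<in> SBo \<and> i < K"
  "FW q \<in> STs \<longleftrightarrow> q \<in> states E"
  "Fetch q \<in> STs \<longleftrightarrow> q \<in> states E"
  "RetR q \<in> STs \<longleftrightarrow> q \<in> states E"
  "Carry q c \<in> STs \<longleftrightarrow> q \<in> states E \<and> c \<in> SBo"
  unfolding STs_def by (auto simp: image_iff)

lemma symb_in: "q \<in> states E \<Longrightarrow> b \<in> SBo \<Longrightarrow> symb q b i \<in> alphT"
proof -
  assume a: "q \<in> states E" "b \<in> SBo"
  have "i < length (bet q b) \<Longrightarrow> bet q b ! i \<in> alph E"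
    using dvalid[of q b] a nth_mem[of i "bet q b"] by (auto simp: SBo_def)
  then show ?thesis by (auto simp: symb_def alphT_def)
qed

lemma wrstep_cl: assumes "q \<in> states E" "b \<in> SBo"
  shows "fst (wrstep q b i) \<in> STs \<and> fst (snd (wrstep q b i)) \<in> alphT"
proof -
  have "length (bet q b) \<le> K" using bet_le assms by (simp add: SBo_def)
  then show ?thesis using dvalid[of q b] assms symb_in[OF assms]
    by (auto simp: wrstep_def STs_simps SBo_def)
qed

lemma pushstep_cl: assumes "q \<in> states E" "b \<in> SBo" "i < K"
  shows "fst (pushstep q b i) \<in> STs \<and> fst (snd (pushstep q b i)) \<in> alphT"
  using dvalid[of q b] assms symb_in[OF assms(1,2)]
  by (auto simp: pushstep_def STs_simps SBo_def)

lemma dec_in: "x \<in> alphT \<Longrightarrow> x \<noteq> SH \<Longrightarrow> x \<noteq> SD \<Longrightarrow> dec x \<in> SBo"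
  by (auto simp: dec_def alphT_def SBo_def sym_bot_def)

lemma closed:
  assumes "s \<in> STs" "h \<in> sym_bot alphT"
  shows "fst (dT s h) \<in> STs \<and> fst (snd (dT s h)) \<in> alphT"
proof (cases s)
  case (Main q)
  then have q: "q \<in> states E" using assms by (simp add: STs_simps)
  show ?thesis
  proof (cases h)
    case None then show ?thesis using Main q by (auto simp: dT_def STs_simps alphT_def)
  next
    case (Some x)
    then have x: "x \<in> alphT" using assms by (auto simp: sym_bot_def)
    show ?thesis
    proof (cases "q = halt E \<or> x = SH \<or> x = SD")
      case True then show ?thesis using Main q x Some by (auto simp: dT_def STs_simps alphT_def)
    next
      case False
      have b: "dec x \<in> SBo" using dec_in x False by blast
      obtain nq: "nxt q (dec x) \<in> states E" and bS: "set (bet q (dec x)) \<subseteq> alph E"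
        and dS: "dr q (dec x) = S \<longrightarrow> length (bet q (dec x)) = 1"
        using dvalid[OF q, of "dec x"] b by (auto simp: SBo_def)
      have hd: "dr q (dec x) = S \<Longrightarrow> hd (bet q (dec x)) \<in> alphT"
        using dS bS by (cases "bet q (dec x)") (auto simp: alphT_def)
      show ?thesis using Main Some False wrstep_cl[OF q b, of 0] nq b hd q
        by (auto simp: dT_def STs_simps alphT_def split: dir.split)
    qed
  qed
next
  case (PW q b)
  then have q: "q \<in> states E" "b \<in> SBo" using assms by (auto simp: STs_simps)
  have kl: "length (bet q b) \<le> K" using bet_le q by (simp add: SBo_def)
  have kl2: "bet q b \<noteq> [] \<Longrightarrow> length (bet q b) - 1 < K" using kl by (cases "bet q b") auto
  have "h \<noteq> None \<Longrightarrow> the h \<in> alphT" using assms by (auto simp: sym_bot_def)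
  then show ?thesis using PW q dvalid[of q b] pushstep_cl[OF q, of "length (bet q b) - 1"] kl2
    by (auto simp: dT_def STs_simps SBo_def alphT_def isD_def)
next
  case (Push q b i)
  then show ?thesis using assms pushstep_cl[of q b i] by (auto simp: dT_def STs_simps)
next
  case (Wr q b i)
  then show ?thesis using assms wrstep_cl[of q b i] by (auto simp: dT_def STs_simps)
next
  case (Carry q c)
  then have "enc c \<in> alphT" using assms by (auto simp: STs_simps enc_def SBo_def sym_bot_def alphT_def)
  then show ?thesis using Carry assms by (auto simp: dT_def STs_simps sym_bot_def isD_def)
next
  case (Lchk q b)
  then show ?thesis using assms by (auto simp: dT_def STs_simps sym_bot_def alphT_def split: option.split)
next
  case (Lfix q b)
  then show ?thesis using assms by (auto simp: dT_def STs_simps sym_bot_def alphT_def)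
next
  case (FW q)
  then show ?thesis using assms by (auto simp: dT_def STs_simps sym_bot_def isD_def alphT_def)
next
  case (RetR q)
  then show ?thesis using assms by (auto simp: dT_def STs_simps sym_bot_def isD_def alphT_def)
next
  case (Fetch q)
  then show ?thesis using assms by (auto simp: dT_def STs_simps sym_bot_def alphT_def SBo_def split: option.split)
next
  case Init0 then show ?thesis by (auto simp: dT_def STs_simps alphT_def)
next
  case Init1 then show ?thesis using assms by (auto simp: dT_def STs_simps sym_bot_def alphT_def split: option.split)
next
  case Init2 then show ?thesis using etm by (auto simp: dT_def STs_simps alphT_def is_etm_def)
qed

definition "TM = \<lparr>states = to_nat ` STs, init = to_nat Init0, halt = to_nat (Main (halt E)), alph = alphT,
   delta = (\<lambda>q h. case dT (from_nat q) h of (s, a, d) \<Rightarrow> (to_nat s, [a], d))\<rparr>"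

definition mc :: "tcfg \<Rightarrow> config" where "mc c = (case c of (s, r) \<Rightarrow> (to_nat s, r))"

lemma step_TM: "step TM (mc c) = mc (stT c)"
proof -
  obtain s A h R' where c: "c = (s, A, h, R')" by (cases c) auto
  obtain s' a d where dd: "dT s h = (s', a, d)" by (cases "dT s h") auto
  show ?thesis
    by (cases d) (auto simp: c dd step_def TM_def stG_def mc_def hol_def hor_def split: list.split)
qed

lemma run_TM: "run TM w n = mc ((stT^^n) (Init0, [], None, w))"
proof (induction n)
  case 0 then show ?case by (simp add: run_def TM_def mc_def)
next
  case (Suc n)
  then show ?case by (simp add: run_def step_TM[symmetric])
qed

lemma halt_TM: "fst (run TM w n) = halt TM \<longleftrightarrow> fst ((stT^^n) (Init0, [], None, w)) = Main (halt E)"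
proof -
  have "fst (run TM w n) = to_nat (fst ((stT^^n) (Init0, [], None, w)))"
    unfolding run_TM by (simp add: mc_def split: prod.split)
  moreover have "halt TM = to_nat (Main (halt E))" by (simp add: TM_def)
  ultimately show ?thesis by simp
qed

lemma absorb: "fst c = Main (halt E) \<Longrightarrow> fst ((stT^^n) c) = Main (halt E)"
proof (induction n)
  case 0 then show ?case by simp
next
  case (Suc n)
  obtain A h R' where c: "(stT^^n) c = (Main (halt E), A, h, R')" using Suc by (cases "(stT^^n) c") auto
  have "dT (Main (halt E)) h = (Main (halt E), case h of Some x \<Rightarrow> x | None \<Rightarrow> SB, S)" by (simp add: dT_def)
  then show ?case using c stG_S[of dT] by simp
qed

lemma fst_repT: "fst (repT c i j) = Main (fst c)" by (simp add: repT_def split: prod.split)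

lemma T_halts_imp:
  assumes w: "w \<in> lists (alph E)" and t: "fst ((stT^^t) (Init0, [], None, w)) = Main (halt E)"
  shows "\<exists>k. fst (run E w k) = halt E"
proof (rule ccontr)
  assume "\<not> ?thesis"
  then have nh: "\<forall>j<t. fst (run E w j) \<noteq> halt E" and nt: "fst (run E w t) \<noteq> halt E" by auto
  obtain t' i j where t': "t \<le> t'" and e: "(stT^^t') (Init0, [], None, w) = repT (run E w t) i j"
    using good[OF w, of t] nh by blast
  have "(stT^^t') (Init0, [], None, w) = (stT^^(t' - t)) ((stT^^t) (Init0, [], None, w))"
    using t' by (metis funpow_add le_add_diff_inverse2 comp_apply)
  then have "fst ((stT^^t') (Init0, [], None, w)) = Main (halt E)" using absorb[OF t] by simp
  then show False using e nt fst_repT by simp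
qed

lemma B_mono: "k0 \<le> k \<Longrightarrow> B n k0 \<le> B n k"
  by (induction k rule: dec_induct) auto

lemma E_halts_imp:
  assumes w: "w \<in> lists (alph E)" and k: "fst (run E w k) = halt E"
  shows "\<exists>t \<le> B (length w) k. fst ((stT^^t) (Init0, [], None, w)) = Main (halt E)"
proof -
  define k0 where "k0 = (LEAST k. fst (run E w k) = halt E)"
  have k0: "fst (run E w k0) = halt E" "k0 \<le> k" using k unfolding k0_def by (auto intro: LeastI Least_le)
  have "\<forall>j<k0. fst (run E w j) \<noteq> halt E" unfolding k0_def using not_less_Least by blast
  then obtain t i j where t: "t \<le> B (length w) k0" and e: "(stT^^t) (Init0, [], None, w) = repT (run E w k0) i j"
    using good[OF w, of k0] by blast
  show ?thesis using order_trans[OF t B_mono[OF k0(2)]] e k0(1) fst_repT by (intro exI[of _ t]) auto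
qed

lemma halts_eq: "w \<in> lists (alph E) \<Longrightarrow> halts TM w \<longleftrightarrow> halts E w"
  unfolding halts_def halt_TM using T_halts_imp E_halts_imp by blast

lemma B_bound: "B n k \<le> n + 3 + k * (2 * (n + 1 + k * (K + 2)) + 3 * K + 12)"
proof (induction k)
  case 0 then show ?case by simp
next
  case (Suc k)
  define X where "X k = 2 * (n + 1 + k * (K + 2)) + 3 * K + 12" for k
  have a: "X k \<le> X (Suc k)" by (simp add: X_def)
  have b: "k * X k \<le> k * X (Suc k)" using a by (rule mult_le_mono2)
  have c: "B n (Suc k) = B n k + X k" by (simp add: X_def)
  have d: "B n k \<le> n + 3 + k * X k" using Suc by (simp add: X_def)
  have e: "Suc k * X (Suc k) = X (Suc k) + k * X (Suc k)" by simp
  have "B n (Suc k) \<le> n + 3 + Suc k * X (Suc k)" using a b c d e by linarith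
  then show ?case by (simp only: X_def)
qed

lemma finQ: "finite (states E)" using etm by (simp add: is_etm_def)
lemma finSBo: "finite SBo" using fin by (simp add: SBo_def sym_bot_def)
lemma finSTs: "finite STs" using finQ finSBo by (simp add: STs_def)
lemma finalphT: "finite alphT" using fin by (simp add: alphT_def)

lemma card_sym_bot: "finite A \<Longrightarrow> card (sym_bot A) = Suc (card A)"
  by (simp add: sym_bot_def card_image)

lemma delta_TM: "delta TM (to_nat s) h = (to_nat (fst (dT s h)), [fst (snd (dT s h))], snd (snd (dT s h)))"
  by (simp add: TM_def split: prod.split)

lemma tm: "is_tm TM"
proof -
  have hE: "halt E \<in> states E" using etm by (simp add: is_etm_def)
  have A: "\<forall>q\<in>states TM. \<forall>b\<in>sym_bot (alph TM). case delta TM q b of (q', \<beta>, d) \<Rightarrow>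
          q' \<in> states TM \<and> set \<beta> \<subseteq> alph TM \<and> (d = S \<longrightarrow> length \<beta> = 1)"
  proof (intro ballI)
    fix q b assume q: "q \<in> states TM" and b: "b \<in> sym_bot (alph TM)"
    obtain s where s: "q = to_nat s" "s \<in> STs" using q by (auto simp: TM_def)
    have "fst (dT s b) \<in> STs \<and> fst (snd (dT s b)) \<in> alphT" using closed[OF s(2)] b by (simp add: TM_def)
    then show "case delta TM q b of (q', \<beta>, d) \<Rightarrow> q' \<in> states TM \<and> set \<beta> \<subseteq> alph TM \<and> (d = S \<longrightarrow> length \<beta> = 1)"
      unfolding s(1) delta_TM by (simp add: TM_def)
  qed
  have B1: "\<forall>a\<in>alph TM. delta TM (halt TM) (Some a) = (halt TM, [a], S)"
    by (simp add: TM_def dT_def)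
  have B2: "\<exists>a\<in>alph TM. delta TM (halt TM) None = (halt TM, [a], S)"
    by (rule bexI[of _ SB]) (simp_all add: TM_def dT_def alphT_def)
  have C: "\<forall>q\<in>states TM. \<forall>b\<in>sym_bot (alph TM). case delta TM q b of (q', \<beta>, d) \<Rightarrow> length \<beta> = 1"
    by (simp add: TM_def split: prod.split)
  show ?thesis unfolding is_tm_def is_etm_def using A B1 B2 C finSTs finalphT hE
    by (simp add: TM_def STs_simps)
qed

lemma cu: "card X \<le> a \<Longrightarrow> card Y \<le> b \<Longrightarrow> card (X \<union> Y) \<le> a + b"
  by (meson add_mono card_Un_le order_trans)

lemma ci: "finite X \<Longrightarrow> card X \<le> a \<Longrightarrow> card (f ` X) \<le> a"
  using card_image_le order_trans by blast

lemma card_STs: "card STs \<le> 3 + card (states E) + card (states E) * card SBo + card (states E) * card SBo + card (states E) * card SBo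
   + card (states E) * (card SBo * K) + card (states E) * (card SBo * K) + card (states E) + card (states E) + card (states E)
   + card (states E) * card SBo"
  unfolding STs_def
  apply (rule cu)+
  using finQ finSBo by (auto intro!: ci simp: card_cartesian_product card_insert_le_m1 card_insert_if)

lemma msize_TM: "msize TM \<le> 27 * (msize E + 4) ^ 4"
proof -
  define m where "m = msize E"
  define A where "A = m + 4"
  have cQ: "card (states E) \<le> m" by (simp add: m_def msize_def)
  have cS: "card (alph E) \<le> m" by (simp add: m_def msize_def)
  have cSBo: "card SBo \<le> A" using cS fin by (simp add: SBo_def card_sym_bot A_def)
  have KA: "K \<le> A" by (simp add: K_def m_def A_def)
  have QA: "card (states E) \<le> A" using cQ by (simp add: A_def)
  have A1: "1 \<le> A" by (simp add: A_def)
  have p1: "x \<le> A \<Longrightarrow> x \<le> A ^ 3" for x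
    using A1 by (metis le_trans self_le_power zero_less_numeral)
  have p2: "x \<le> A \<Longrightarrow> y \<le> A \<Longrightarrow> x * y \<le> A ^ 3" for x y
  proof -
    assume "x \<le> A" "y \<le> A"
    then have "x * y \<le> A * A" by (rule mult_le_mono)
    also have "\<dots> \<le> A * A * A" using A1 by simp
    finally show ?thesis by (simp add: power3_eq_cube)
  qed
  have p3: "x \<le> A \<Longrightarrow> y \<le> A \<Longrightarrow> z \<le> A \<Longrightarrow> x * (y * z) \<le> A ^ 3" for x y z
  proof -
    assume "x \<le> A" "y \<le> A" "z \<le> A"
    then have "x * (y * z) \<le> A * (A * A)" by (intro mult_le_mono) auto
    then show ?thesis by (simp add: power3_eq_cube)
  qed
  have c3: "3 \<le> 3 * A ^ 3" using A1 by simp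
  have cST: "card STs \<le> 13 * A ^ 3"
    using card_STs p1[OF QA] p2[OF QA cSBo] p3[OF QA cSBo KA] c3 by linarith
  have cST': "card (to_nat ` STs) = card STs" by (simp add: card_image)
  have cAT: "card alphT \<le> A - 1"
  proof -
    have "card alphT \<le> card (alph E) + card {SH, SB, SD}" unfolding alphT_def by (rule card_Un_le)
    also have "card {SH, SB, SD} \<le> 3" by (simp add: card_insert_if)
    finally show ?thesis using cS by (simp add: A_def)
  qed
  have cSAT: "card (sym_bot alphT) \<le> A" using cAT finalphT card_sym_bot A1 by simp
  have sum1: "(\<Sum>(q,b)\<in>states TM \<times> sym_bot (alph TM). length (fst (snd (delta TM q b)))) = card (states TM \<times> sym_bot (alph TM))"
  proof -
    have one: "length (fst (snd (delta TM q b))) = 1" for q b by (simp add: TM_def split: prod.split)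
    show ?thesis by (simp add: one case_prod_beta)
  qed
  have "msize TM = card STs + card alphT + card STs * card (sym_bot alphT)"
    unfolding msize_def sum1 by (simp add: TM_def cST' card_cartesian_product)
  also have "\<dots> \<le> 13 * A ^ 3 + A + 13 * A ^ 3 * A"
    using cST cAT cSAT by (intro add_mono mult_le_mono) auto
  also have "\<dots> \<le> 27 * A ^ 4"
  proof -
    have "A \<le> A ^ 4" using A1 by (simp add: self_le_power)
    moreover have "A ^ 3 \<le> A ^ 4" using A1 by (simp add: power_increasing)
    moreover have "A ^ 3 * A = A ^ 4" by (simp add: power_Suc2[symmetric] del: power_Suc)
    ultimately show ?thesis by linarith
  qed
  finally show ?thesis by (simp add: A_def m_def)
qed

lemma sim_TM: "simulates TM E"
  unfolding simulates_def
proof (intro conjI allI impI ballI)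
  show "alph E \<subseteq> alph TM" by (auto simp: TM_def alphT_def)
next
  fix w assume "w \<in> lists (alph E)" then show "halts TM w = halts E w" by (rule halts_eq)
next
  fix p :: "nat poly"
  assume H: "\<forall>w\<in>lists (alph E). halts E w \<longrightarrow> halts_within E w (poly p (length w))"
  define p' where "p' = [:3, 1:] + p * (smult 2 ([:1, 1:] + smult (K + 2) p) + [:3 * K + 12:])"
  show "\<exists>p'. \<forall>w\<in>lists (alph E). halts TM w \<longrightarrow> halts_within TM w (poly p' (length w))"
  proof (intro exI ballI impI)
    fix w assume w: "w \<in> lists (alph E)" and hT: "halts TM w"
    define n where "n = length w"
    define P where "P = poly p n"
    have "halts E w" using hT halts_eq[OF w] by simp
    then obtain k where k: "k \<le> P" "fst (run E w k) = halt E"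
      using H w unfolding halts_within_def P_def n_def by blast
    obtain t where t: "t \<le> B n k" "fst ((stT^^t) (Init0, [], None, w)) = Main (halt E)"
      using E_halts_imp[OF w k(2)] n_def by blast
    have "t \<le> B n P" using order_trans[OF t(1) B_mono[OF k(1)]] .
    also have "\<dots> \<le> n + 3 + P * (2 * (n + 1 + P * (K + 2)) + 3 * K + 12)" by (rule B_bound)
    also have "\<dots> = poly p' n" by (simp add: p'_def P_def algebra_simps)
    finally have "t \<le> poly p' (length w)" by (simp add: n_def)
    then show "halts_within TM w (poly p' (length w))"
      unfolding halts_within_def using t(2) halt_TM by blast
  qed
qed

end

theorem mainTheorem4:
  shows "(\<exists>p :: nat poly. \<forall>T. is_tm T \<longrightarrow>
            (\<exists>E. is_etm E \<and> msize E \<le> poly p (msize T) \<and> simulates E T))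
       \<and> (\<exists>p :: nat poly. \<forall>E. is_etm E \<longrightarrow>
            (\<exists>T. is_tm T \<and> msize T \<le> poly p (msize E) \<and> simulates T E))"
proof
  show "\<exists>p :: nat poly. \<forall>T. is_tm T \<longrightarrow>
            (\<exists>E. is_etm E \<and> msize E \<le> poly p (msize T) \<and> simulates E T)"
  proof (rule exI[of _ "[:0, 1:]"], intro allI impI)
    fix T assume "is_tm T"
    then show "\<exists>E. is_etm E \<and> msize E \<le> poly [:0, 1:] (msize T) \<and> simulates E T"
      by (intro exI[of _ T]) (auto simp: is_tm_def simulates_def)
  qed
next
  show "\<exists>p :: nat poly. \<forall>E. is_etm E \<longrightarrow>
            (\<exists>T. is_tm T \<and> msize T \<le> poly p (msize E) \<and> simulates T E)"
  proof (rule exI[of _ "smult 27 ([:4, 1:] ^ 4)"], intro allI impI)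
    fix E assume e: "is_etm E"
    interpret sim E by (rule sim.intro[OF e])
    show "\<exists>T. is_tm T \<and> msize T \<le> poly (smult 27 ([:4, 1:] ^ 4)) (msize E) \<and> simulates T E"
      using tm msize_TM sim_TM by (intro exI[of _ TM]) (simp add: poly_power add.commute)
  qed
qed

end
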